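(* Let $n\in\mathbb N$ with $n\ge 10$. Then $\mathrm{ex}(2n-7;T_n^3)=n^2-8n+22$.
   Context: All graphs are finite simple graphs. For a graph $L$, $\mathrm{ex}(p;L)$ denotes the maximum number of edges in a graph on $p$ vertices that contains no subgraph isomorphic to $L$. For $n\ge 6$, $T_n^3$ is the tree on vertex set $\{v_0,\ldots,v_{n-1}\}$ with edge set $\{v_0v_1,v_0v_2,\ldots,v_0v_{n-4},\ v_1v_{n-3},\ v_1v_{n-2},\ v_1v_{n-1}\}$. *)

theory Defs
  imports Main
begin

definition simple_graph :: "'a set \<Rightarrow> 'a set set \<Rightarrow> bool" where
  "simple_graph V E \<longleftrightarrow> finite V \<and> (\<forall>e\<in>E. e \<subseteq> V \<and> card e = 2)"

definition contains_copy ::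
  "'b set \<Rightarrow> 'b set set \<Rightarrow> 'a set \<Rightarrow> 'a set set \<Rightarrow> bool" where
  "contains_copy VL EL V E \<longleftrightarrow>
     (\<exists>f. inj_on f VL \<and> f ` VL \<subseteq> V \<and> (\<forall>e\<in>EL. f ` e \<in> E))"

text \<open>Turan number ex(p;L): maximum number of edges of an L-free graph on p vertices
  (vertex set taken to be {0..<p}, which is w.l.o.g. up to isomorphism).\<close>

definition ex_num :: "nat \<Rightarrow> 'b set \<Rightarrow> 'b set set \<Rightarrow> nat" where
  "ex_num p VL EL = Max {card E | E. simple_graph {0..<p} E \<and> \<not> contains_copy VL EL {0..<p} E}"

text \<open>The tree T_n^3 on vertices {0..<n} (v_i = i).\<close>

definition T3_edges :: "nat \<Rightarrow> nat set set" where
  "T3_edges n = {{0, i} | i. 1 \<le> i \<and> i \<le> n - 4} \<union> {{1, n - 3}, {1, n - 2}, {1, n - 1}}"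

end

theory Submission
  imports Defs
begin


definition nb :: "nat set set \<Rightarrow> nat \<Rightarrow> nat set" where
  "nb E v = {w. {v,w} \<in> E}"

lemma nb_sym: "w \<in> nb E v \<longleftrightarrow> v \<in> nb E w"
  by (simp add: nb_def insert_commute)

context
  fixes V :: "nat set" and E :: "nat set set"
  assumes sg: "simple_graph V E"
begin

lemma finV: "finite V" using sg by (simp add: simple_graph_def)

lemma nb_sub: "nb E v \<subseteq> V"
proof
  fix w assume "w \<in> nb E v"
  then have "{v,w} \<in> E" by (simp add: nb_def)
  then show "w \<in> V" using sg by (auto simp: simple_graph_def)
qed

lemma nb_fin: "finite (nb E v)" using nb_sub finV finite_subset by blast

lemma nb_irr: "v \<notin> nb E v"
proof
  assume "v \<in> nb E v"
  then have "{v} \<in> E" by (simp add: nb_def)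
  then show False using sg by (auto simp: simple_graph_def)
qed

lemma finE: "finite E"
proof -
  have "E \<subseteq> Pow V" using sg by (auto simp: simple_graph_def)
  then show ?thesis using finV by (meson finite_Pow_iff finite_subset)
qed

lemma deg_eq: "card (nb E v) = card {e\<in>E. v \<in> e}"
proof -
  have "bij_betw (\<lambda>w. {v,w}) (nb E v) {e\<in>E. v \<in> e}"
  proof (rule bij_betwI')
    fix x y assume "x \<in> nb E v" "y \<in> nb E v"
    then show "({v, x} = {v, y}) = (x = y)" using nb_irr
      by (metis doubleton_eq_iff)
  next
    fix x assume "x \<in> nb E v" then show "{v, x} \<in> {e \<in> E. v \<in> e}" by (simp add: nb_def)
  next
    fix e assume "e \<in> {e \<in> E. v \<in> e}"
    then have "e \<in> E" "v \<in> e" by auto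
    then have "card e = 2" using sg by (auto simp: simple_graph_def)
    then obtain a b where "e = {a,b}" "a \<noteq> b" by (meson card_2_iff)
    with \<open>v \<in> e\<close> obtain w where "e = {v,w}" by auto
    then show "\<exists>x\<in>nb E v. e = {v, x}" using \<open>e \<in> E\<close> by (auto simp: nb_def)
  qed
  then show ?thesis by (rule bij_betw_same_card)
qed

lemma handshake: "(\<Sum>v\<in>V. card (nb E v)) = 2 * card E"
proof -
  have "(\<Sum>v\<in>V. card (nb E v)) = (\<Sum>v\<in>V. card {e\<in>E. v \<in> e})" using deg_eq by simp
  also have "\<dots> = 2 * card E"
  proof (rule sum_multicount[OF finV finE])
    show "\<forall>e\<in>E. card {v \<in> V. v \<in> e} = 2"
    proof
      fix e assume "e \<in> E"
      then have "e \<subseteq> V" "card e = 2" using sg by (auto simp: simple_graph_def)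
      moreover have "{v \<in> V. v \<in> e} = e" using \<open>e \<subseteq> V\<close> by auto
      ultimately show "card {v \<in> V. v \<in> e} = 2" by simp
    qed
  qed
  finally show ?thesis .
qed

lemma dcount:
  assumes "A \<subseteq> V" "B \<subseteq> V"
  shows "(\<Sum>a\<in>A. card (nb E a \<inter> B)) = (\<Sum>b\<in>B. card (nb E b \<inter> A))"
proof -
  have fA: "finite A" and fB: "finite B" using assms finV finite_subset by auto
  have "(\<Sum>a\<in>A. card (nb E a \<inter> B)) = (\<Sum>a\<in>A. card {b\<in>B. b \<in> nb E a})"
    by (intro sum.cong refl arg_cong[where f=card]) auto
  also have "\<dots> = (\<Sum>b\<in>B. card {a\<in>A. b \<in> nb E a})"
    by (rule sum_multicount_gen[OF fA fB]) auto
  also have "\<dots> = (\<Sum>b\<in>B. card (nb E b \<inter> A))"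
    by (intro sum.cong refl arg_cong[where f=card]) (auto simp: nb_sym)
  finally show ?thesis .
qed

end


context
  fixes V :: "nat set" and E :: "nat set set"
  assumes sg: "simple_graph V E"
begin

lemma inj_Un2:
  assumes d: "f ` X \<inter> f ` Y = {}" and iX: "inj_on f X" and iY: "inj_on f Y"
  shows "inj_on f (X \<union> Y)"
proof (rule inj_onI)
  fix x y assume x: "x \<in> X \<union> Y" and y: "y \<in> X \<union> Y" and e: "f x = f y"
  have nxy: False if "a \<in> X" "b \<in> Y" "f a = f b" for a b
  proof -
    have "f a \<in> f ` X" using that(1) by (rule imageI)
    moreover have "f b \<in> f ` Y" using that(2) by (rule imageI)
    ultimately have "f a \<in> f ` X" "f a \<in> f ` Y" using that(3) by auto
    then show False using d by blast
  qed
  show "x = y"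
  proof (cases "x \<in> X")
    case True
    show ?thesis
    proof (cases "y \<in> X")
      case True then show ?thesis using \<open>x \<in> X\<close> iX e inj_on_def by metis
    next
      case False then have "y \<in> Y" using y by auto
      then show ?thesis using nxy \<open>x \<in> X\<close> e by blast
    qed
  next
    case False then have xY: "x \<in> Y" using x by auto
    show ?thesis
    proof (cases "y \<in> X")
      case True then show ?thesis using nxy xY e by metis
    next
      case False then have "y \<in> Y" using y by auto
      then show ?thesis using xY iY e inj_on_def by metis
    qed
  qed
qed

lemma choose_split:
  assumes fA: "finite A" and fB: "finite B" and B3: "3 \<le> card B" and U: "k + 3 \<le> card (A \<union> B)"
    and Ak: "k \<le> card A"
  obtains B' where "B' \<subseteq> B" "card B' = 3" "k \<le> card (A - B')"
proof (cases "3 \<le> card (B - A)")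
  case True
  then obtain B' where B': "B' \<subseteq> B - A" "card B' = 3" by (meson obtain_subset_with_card_n)
  then have "A - B' = A" by auto
  moreover have "B' \<subseteq> B" using B' by auto
  ultimately show ?thesis using that B' Ak by metis
next
  case False
  define k0 where "k0 = card (B - A)"
  have "A \<union> B = A \<union> (B - A)" by auto
  moreover have "card (A \<union> (B - A)) = card A + card (B - A)" using fA fB by (intro card_Un_disjoint) auto
  ultimately have cu: "card A + k0 = card (A \<union> B)" unfolding k0_def by simp
  have cb: "card (B \<inter> A) + k0 = card B"
    unfolding k0_def using card_Int_Diff[OF fB, of A] by simp
  then have "3 - k0 \<le> card (B \<inter> A)" using B3 by linarith
  then obtain X where X: "X \<subseteq> B \<inter> A" "card X = 3 - k0" "finite X" by (meson obtain_subset_with_card_n)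
  define B' where "B' = (B - A) \<union> X"
  have "card B' = k0 + (3 - k0)"
    unfolding B'_def using X fB by (subst card_Un_disjoint) (auto simp: k0_def)
  then have c3: "card B' = 3" using False k0_def by linarith
  have "A - B' = A - X" unfolding B'_def by auto
  then have "card (A - B') = card A - (3 - k0)" using X by (simp add: card_Diff_subset)
  then have "k \<le> card (A - B')" using cu U False k0_def by linarith
  moreover have "B' \<subseteq> B" unfolding B'_def using X by auto
  ultimately show ?thesis using that c3 by blast
qed

lemma emb:
  assumes n6: "n \<ge> 6" and uv: "{u,v} \<in> E"
    and cA: "n - 5 \<le> card (nb E u - {v})" and cB: "3 \<le> card (nb E v - {u})"
    and cU: "n - 2 \<le> card ((nb E u - {v}) \<union> (nb E v - {u}))"
  shows "contains_copy {0..<n} (T3_edges n) V E"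
proof -
  define A where "A = nb E u - {v}"
  define B where "B = nb E v - {u}"
  have fA: "finite A" and fB: "finite B" unfolding A_def B_def using nb_fin[OF sg] by auto
  have uvV: "u \<in> V" "v \<in> V" and uv2: "card {u,v} = 2" using uv sg by (auto simp: simple_graph_def)
  then have "u \<noteq> v" by auto
  have U: "n - 5 + 3 \<le> card (A \<union> B)" using cU n6 unfolding A_def B_def by linarith
  obtain B' where B': "B' \<subseteq> B" "card B' = 3" "n - 5 \<le> card (A - B')"
    using choose_split[OF fA fB cB[folded B_def] U cA[folded A_def]] by blast
  obtain A' where A': "A' \<subseteq> A - B'" "card A' = n - 5" "finite A'"
    using B'(3) by (meson obtain_subset_with_card_n)
  have fB': "finite B'" using B' fB finite_subset by blast
  obtain ga where ga: "bij_betw ga {0..<n-5} A'" using ex_bij_betw_nat_finite[OF A'(3)] A'(2) by auto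
  obtain gb where gb: "bij_betw gb {0..<(3::nat)} B'" using ex_bij_betw_nat_finite[OF fB'] B'(2) by auto
  define f where "f i = (if i = 0 then u else if i = 1 then v else if i < n - 3 then ga (i-2) else gb (i-(n-3)))" for i
  have uA: "u \<notin> A" "v \<notin> A" "u \<notin> B" "v \<notin> B"
    unfolding A_def B_def using nb_irr[OF sg] by auto
  have AB: "A' \<inter> B' = {}" using A' by auto
  have fa: "f i = ga (i-2)" "f i \<in> A'" if "2 \<le> i" "i < n - 3" for i
    using that ga unfolding f_def bij_betw_def by auto
  have fb: "f i = gb (i-(n-3))" "f i \<in> B'" if "n - 3 \<le> i" "i < n" for i
    using that gb n6 unfolding f_def bij_betw_def by auto
  have f01: "f 0 = u" "f 1 = v" unfolding f_def by auto
  have A'n: "u \<notin> A' \<union> B'" "v \<notin> A' \<union> B'"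
    using A' B' uA by auto
  have iA: "inj_on f {2..<n-3}"
  proof (rule inj_onI)
    fix i j assume i: "i \<in> {2..<n-3}" and j: "j \<in> {2..<n-3}" and eq: "f i = f j"
    then have "ga (i-2) = ga (j-2)" using fa by auto
    moreover have "inj_on ga {0..<n-5}" using ga bij_betw_def by blast
    ultimately have "i - 2 = j - 2" using i j by (auto simp: inj_on_def)
    then show "i = j" using i j by auto
  qed
  have iB: "inj_on f {n-3..<n}"
  proof (rule inj_onI)
    fix i j assume i: "i \<in> {n-3..<n}" and j: "j \<in> {n-3..<n}" and eq: "f i = f j"
    then have "gb (i-(n-3)) = gb (j-(n-3))" using fb by auto
    moreover have "inj_on gb {0..<3}" using gb bij_betw_def by blast
    ultimately have "i - (n-3) = j - (n-3)" using i j n6 by (auto simp: inj_on_def)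
    then show "i = j" using i j by auto
  qed
  have sA: "f ` {2..<n-3} \<subseteq> A'" using fa by auto
  have sB: "f ` {n-3..<n} \<subseteq> B'" using fb by auto
  have i01: "inj_on f {0,1}" using f01 \<open>u \<noteq> v\<close> by (simp add: inj_on_def)
  have s01: "f ` {0,1} = {u,v}" using f01 by auto
  have "f ` {2..<n-3} \<inter> f ` {n-3..<n} \<subseteq> A' \<inter> B'" using sA sB by (rule Int_mono)
  then have "f ` {2..<n-3} \<inter> f ` {n-3..<n} = {}" using AB by simp
  then have iAB: "inj_on f ({2..<n-3} \<union> {n-3..<n})"
    using iA iB by (rule inj_Un2)
  have sAB: "f ` ({2..<n-3} \<union> {n-3..<n}) \<subseteq> A' \<union> B'" using sA sB by auto
  have "f ` {0,1} \<inter> f ` ({2..<n-3} \<union> {n-3..<n}) \<subseteq> {u,v} \<inter> (A' \<union> B')" using s01 sAB by (intro Int_mono) auto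
  moreover have "{u,v} \<inter> (A' \<union> B') = {}" using A'n by auto
  ultimately have "f ` {0,1} \<inter> f ` ({2..<n-3} \<union> {n-3..<n}) = {}" by (metis subset_empty)
  then have "inj_on f ({0,1} \<union> ({2..<n-3} \<union> {n-3..<n}))"
    using i01 iAB by (rule inj_Un2)
  moreover have "{0..<n} = {0,1} \<union> ({2..<n-3} \<union> {n-3..<n})" using n6 by (auto simp: atLeastLessThan_iff)
  ultimately have inj: "inj_on f {0..<n}" by simp
  have img: "f ` {0..<n} \<subseteq> V"
  proof
    fix y assume "y \<in> f ` {0..<n}"
    then obtain i where i: "i < n" "y = f i" by auto
    have "A' \<subseteq> V" "B' \<subseteq> V" using A' B' nb_sub[OF sg] unfolding A_def B_def by auto
    show "y \<in> V"
    proof (cases "i < 2")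
      case True then have "i = 0 \<or> i = 1" by auto
      then show ?thesis using i f01 uvV by auto
    next
      case False
      show ?thesis
      proof (cases "i < n - 3")
        case True then show ?thesis using False i fa \<open>A' \<subseteq> V\<close> by auto
      next
        case c: False then show ?thesis using False i fb \<open>B' \<subseteq> V\<close> by auto
      qed
    qed
  qed
  have edges: "f ` e \<in> E" if eT: "e \<in> T3_edges n" for e
  proof -
    consider (a) i where "e = {0,i}" "1 \<le> i" "i \<le> n - 4" | (b) j where "e = {1,j}" "j \<in> {n-3,n-2,n-1}"
      using eT unfolding T3_edges_def by blast
    then show ?thesis
    proof cases
      case a
      then have fe: "f ` e = {u, f i}" using f01 by auto
      show ?thesis
      proof (cases "i = 1")
        case True then show ?thesis using fe f01 uv by simp
      next
        case False
        then have "f i \<in> A'" using fa a n6 by auto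
        then have "f i \<in> nb E u" using A' unfolding A_def by auto
        then show ?thesis using fe by (simp add: nb_def)
      qed
    next
      case b
      then have fe: "f ` e = {v, f j}" using f01 by auto
      have "n - 3 \<le> j" "j < n" using b n6 by auto
      then have "f j \<in> B'" by (rule fb(2))
      then have "f j \<in> nb E v" using B' unfolding B_def by auto
      then show ?thesis using fe by (simp add: nb_def)
    qed
  qed
  show ?thesis unfolding contains_copy_def using inj img edges by blast
qed

end


lemma num1: "(m::nat) \<ge> 6 \<Longrightarrow> (2*m+1)*(m-1) \<le> 2*m*m + 12"
  by (simp add: diff_mult_distrib2)
lemma num2: assumes "(m::nat) \<ge> 6" "D + a = 2*m" "a + 3 \<le> m" shows "6*D + a*(a-1) \<le> 2*m*m + 12"
proof -
  obtain j where j: "m = a + 3 + j" using assms(3) by (metis add.commute le_iff_add)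
  then have D: "D = a + 6 + 2*j" using assms(2) by linarith
  show ?thesis
  proof (cases a)
    case 0
    then have "j \<ge> 3" using j assms(1) by linarith
    then have "9 \<le> j * j" using mult_le_mono[of 3 j 3 j] by simp
    then show ?thesis using 0 j D by (simp add: algebra_simps)
  next
    case (Suc b)
    then show ?thesis using j D by (simp add: algebra_simps)
  qed
qed
lemma num3: "(m::nat) \<ge> 6 \<Longrightarrow> (m+3)*(m+2) + (m-2)*(m-3) \<le> 2*m*m+12"
proof -
  assume "m \<ge> 6" then obtain k where "m = k + 6" by (metis add.commute le_iff_add)
  then show ?thesis by (simp add: algebra_simps)
qed
lemma num4: "(m::nat) \<ge> 6 \<Longrightarrow> (m+2)*(m+1) + (m-1)*(m-2) + 6 \<le> 2*m*m+12"
proof -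
  assume "m \<ge> 6" then obtain k where "m = k + 6" by (metis add.commute le_iff_add)
  then show ?thesis by (simp add: algebra_simps)
qed
lemma num5: "(m::nat) \<ge> 6 \<Longrightarrow> (m+1)*m + m*(m-1) \<le> 2*m*m"
  using diff_mult_distrib2 by simp

lemma sum_le_nat: "(\<And>i. i \<in> A \<Longrightarrow> f i \<le> (K::nat)) \<Longrightarrow> sum f A \<le> card A * K"
  using sum_bounded_above[of A f K] by simp

lemma sum_ge_nat: "(\<And>i. i \<in> A \<Longrightarrow> (K::nat) \<le> f i) \<Longrightarrow> card A * K \<le> sum f A"
  using sum_bounded_below[of A K f] by simp

lemma sum_ind: "finite A \<Longrightarrow> (\<Sum>w\<in>A. (if w \<in> S then 1 else 0::nat)) = card (A \<inter> S)"
  by (simp add: sum.If_cases Int_def)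

abbreviation dg :: "nat set set \<Rightarrow> nat \<Rightarrow> nat" where "dg E v \<equiv> card (nb E v)"

lemma sum_tsub: "finite F \<Longrightarrow> (\<Sum>w\<in>F. (b w - k)) \<le> (\<Sum>w\<in>F. b w) - (k::nat)"
proof (induction F rule: finite_induct)
  case empty then show ?case by simp
next
  case (insert a F)
  then have "(\<Sum>w\<in>insert a F. (b w - k)) = (b a - k) + (\<Sum>w\<in>F. (b w - k))" by simp
  also have "\<dots> \<le> (b a - k) + ((\<Sum>w\<in>F. b w) - k)" using insert by simp
  also have "\<dots> \<le> (b a + (\<Sum>w\<in>F. b w)) - k" by linarith
  also have "\<dots> = (\<Sum>w\<in>insert a F. b w) - k" using insert by simp
  finally show ?case .
qed

context
  fixes V :: "nat set" and E :: "nat set set" and m :: nat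
  assumes sg: "simple_graph V E" and cV: "card V = 2*m+1" and m6: "m \<ge> 6"
    and F: "\<And>u v. {u,v} \<in> E \<Longrightarrow> m \<le> dg E u \<Longrightarrow> 4 \<le> dg E v \<Longrightarrow>
              dg E u + card (nb E v - nb E u - {u}) \<le> m + 2"
begin

lemma main_count: "(\<Sum>v\<in>V. dg E v) \<le> 2*m*m + 12"
proof -
  have finV: "finite V" using finV[OF sg] .
  have Vne: "V \<noteq> {}" using cV by auto
  define D where "D = Max (dg E ` V)"
  have "D \<in> dg E ` V" unfolding D_def using finV Vne by (intro Max_in) auto
  then obtain u where uV: "u \<in> V" and du: "dg E u = D" by auto
  have dle: "dg E z \<le> D" if "z \<in> V" for z
    using finV that unfolding D_def by simp
  define C where "C = insert u (nb E u)"
  define W where "W = V - C"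
  have nbsub: "nb E z \<subseteq> V" for z using nb_sub[OF sg] .
  have nbfin: "finite (nb E z)" for z using nb_fin[OF sg] .
  have CV: "C \<subseteq> V" unfolding C_def using uV nbsub by auto
  have uC: "u \<notin> nb E u" using nb_irr[OF sg] .
  have cC: "card C = D + 1" unfolding C_def using uC nbfin du by simp
  have finC: "finite C" and finW: "finite W" using CV finV finite_subset unfolding W_def by auto
  have cW: "card W = 2*m - D" unfolding W_def using card_Diff_subset[OF finC CV] cV cC by simp
  have WV: "W \<subseteq> V" unfolding W_def by auto
  have sumV: "(\<Sum>v\<in>V. dg E v) = (\<Sum>v\<in>C. dg E v) + (\<Sum>v\<in>W. dg E v)"
    unfolding W_def using sum.subset_diff[OF CV finV] by (simp add: add.commute)
  have split: "dg E z = card (nb E z \<inter> C) + card (nb E z \<inter> W)" for z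
  proof -
    have "nb E z - C = nb E z \<inter> W" unfolding W_def using nbsub by auto
    then show ?thesis using card_Int_Diff[OF nbfin, of z C] by simp
  qed
  have xW: "nb E v \<inter> W = nb E v - nb E u - {u}" for v
    unfolding W_def C_def using nbsub by auto
  have "nb E u \<inter> W = {}" unfolding W_def C_def by auto
  then have xu: "card (nb E u \<inter> W) = 0" by simp
  have xsmall: "card (nb E v \<inter> W) \<le> dg E v - 1" if "v \<in> nb E u" for v
  proof -
    have "u \<in> nb E v" using that nb_sym by metis
    moreover have "nb E v \<inter> W \<subseteq> nb E v - {u}" unfolding W_def C_def by auto
    ultimately show ?thesis using nbfin card_mono[OF _ \<open>nb E v \<inter> W \<subseteq> nb E v - {u}\<close>]
      by (metis card_Diff_singleton finite_Diff)
  qed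
  have xbig: "D + card (nb E v \<inter> W) \<le> m + 2" if "v \<in> nb E u" "4 \<le> dg E v" "m \<le> D" for v
  proof -
    have "{u,v} \<in> E" using that(1) by (simp add: nb_def)
    then show ?thesis using F[of u v] that du xW by simp
  qed
  have Wdeg: "card (nb E w \<inter> W) \<le> card W - 1" if "w \<in> W" for w
  proof -
    have "nb E w \<inter> W \<subseteq> W - {w}" using nb_irr[OF sg] by auto
    then show ?thesis using finW that by (metis card_Diff_singleton card_mono finite_Diff)
  qed
  have dc: "(\<Sum>w\<in>W. card (nb E w \<inter> A)) = (\<Sum>a\<in>A. card (nb E a \<inter> W))" if "A \<subseteq> V" for A
    using dcount[OF sg WV that] .
  have GW: "(\<Sum>w\<in>W. dg E w) \<le> (\<Sum>v\<in>C. card (nb E v \<inter> W)) + card W * (card W - 1)"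
  proof -
    have "(\<Sum>w\<in>W. dg E w) = (\<Sum>w\<in>W. card (nb E w \<inter> C)) + (\<Sum>w\<in>W. card (nb E w \<inter> W))"
      using split by (simp add: sum.distrib)
    also have "(\<Sum>w\<in>W. card (nb E w \<inter> W)) \<le> card W * (card W - 1)"
      using sum_bounded_above[of W "\<lambda>w. card (nb E w \<inter> W)" "card W - 1"] Wdeg by simp
    finally show ?thesis using dc[OF CV] by simp
  qed
  have tot: "(\<Sum>v\<in>V. dg E v) \<le> (\<Sum>v\<in>C. dg E v + card (nb E v \<inter> W)) + card W * (card W - 1)"
    using sumV GW by (simp add: sum.distrib)
  have sumC: "(\<Sum>v\<in>C. f v) = f u + (\<Sum>v\<in>nb E u. f v)" for f :: "nat \<Rightarrow> nat"
    unfolding C_def using uC nbfin by simp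
  have vnb: "{u,v} \<in> E" if "v \<in> nb E u" for v using that by (simp add: nb_def)
  have DV: "D \<le> 2*m"
  proof -
    have "card C \<le> card V" using CV finV card_mono by blast
    then show ?thesis using cC cV by simp
  qed
  consider "D \<le> m - 1" | "D = m" | "D = m+1" | "D = m+2" | "D \<ge> m+3" by linarith
  then show ?thesis
  proof cases
    case 1
    have "(\<Sum>v\<in>V. dg E v) \<le> card V * (m - 1)"
    proof (rule sum_le_nat)
      fix v assume "v \<in> V" then show "dg E v \<le> m - 1" using dle[of v] 1 by linarith
    qed
    then show ?thesis using cV num1[OF m6] by simp
  next
    case 5
    have small: "dg E v \<le> 3" if v: "v \<in> nb E u" for v
    proof (rule ccontr)
      assume "\<not> dg E v \<le> 3"
      then have "4 \<le> dg E v" by simp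
      then have "D + card (nb E v \<inter> W) \<le> m + 2" using xbig[OF v] 5 by simp
      then show False using 5 by simp
    qed
    have "(\<Sum>v\<in>nb E u. dg E v + card (nb E v \<inter> W)) \<le> card (nb E u) * 5"
    proof (rule sum_le_nat)
      fix v assume "v \<in> nb E u"
      then show "dg E v + card (nb E v \<inter> W) \<le> 5" using small[of v] xsmall[of v] by linarith
    qed
    then have "(\<Sum>v\<in>C. dg E v + card (nb E v \<inter> W)) \<le> 6 * D"
      using sumC xu du by simp
    then have "(\<Sum>v\<in>V. dg E v) \<le> 6 * D + card W * (card W - 1)" using tot by linarith
    moreover have "6 * D + card W * (card W - 1) \<le> 2*m*m + 12"
      using num2[OF m6, of D "card W"] cW DV 5 by simp
    ultimately show ?thesis by linarith
  next
    case 4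
    have "(\<Sum>v\<in>C. dg E v + card (nb E v \<inter> W)) \<le> card C * (m+2)"
    proof (rule sum_le_nat)
      fix v assume vC: "v \<in> C"
      show "dg E v + card (nb E v \<inter> W) \<le> m + 2"
      proof (cases "v = u")
        case True then show ?thesis using xu du 4 by simp
      next
        case False then have v: "v \<in> nb E u" using vC C_def by auto
        show ?thesis
        proof (cases "4 \<le> dg E v")
          case True
          then have "card (nb E v \<inter> W) = 0" using xbig[OF v True] 4 by simp
          then show ?thesis using dle[of v] v nbsub 4 by auto
        next
          case False then show ?thesis using xsmall[OF v] m6 by linarith
        qed
      qed
    qed
    then have a: "(\<Sum>v\<in>C. dg E v + card (nb E v \<inter> W)) \<le> (m+3)*(m+2)" using cC 4 by (simp add: algebra_simps)
    have b: "card W * (card W - 1) = (m-2)*(m-3)" using cW 4 by (simp add: diff_diff_left)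
    show ?thesis using tot a b num3[OF m6] by linarith
  next
    case 3
    define Cb where "Cb = {v\<in>C. m \<le> dg E v}"
    define Cn where "Cn = {v\<in>C. \<not> m \<le> dg E v}"
    have CbV: "Cb \<subseteq> V" "Cn \<subseteq> V" using CV by (auto simp: Cb_def Cn_def)
    have xle1: "card (nb E v \<inter> W) \<le> 1" if vb: "v \<in> Cb" for v
    proof (cases "v = u")
      case True then show ?thesis using xu by simp
    next
      case False then have v: "v \<in> nb E u" using vb by (auto simp: Cb_def C_def)
      have "4 \<le> dg E v" using vb m6 by (auto simp: Cb_def)
      then show ?thesis using xbig[OF v] 3 by simp
    qed
    have C1: "dg E v + (if \<not> m \<le> dg E v then card (nb E v \<inter> W) else 0) \<le> m + 1" if vC: "v \<in> C" for v
    proof (cases "m \<le> dg E v")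
      case True then show ?thesis using dle[of v] vC CV 3 by auto
    next
      case False
      then have "v \<noteq> u" using du 3 by auto
      then have v: "v \<in> nb E u" using vC C_def by auto
      show ?thesis
      proof (cases "4 \<le> dg E v")
        case True then have "card (nb E v \<inter> W) \<le> 1" using xbig[OF v] 3 by simp
        then show ?thesis using False by simp
      next
        case False2: False then show ?thesis using xsmall[OF v] m6 by auto
      qed
    qed
    have C2: "dg E w \<le> (m-2) + card (nb E w \<inter> Cn) + (card (nb E w \<inter> Cb) - (m-4))" if wW: "w \<in> W" for w
    proof -
      have eqC: "nb E w \<inter> C = (nb E w \<inter> Cb) \<union> (nb E w \<inter> Cn)" by (auto simp: Cb_def Cn_def)
      have "card ((nb E w \<inter> Cb) \<union> (nb E w \<inter> Cn)) = card (nb E w \<inter> Cb) + card (nb E w \<inter> Cn)"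
        using nbfin by (intro card_Un_disjoint) (auto simp: Cb_def Cn_def)
      then have cc: "card (nb E w \<inter> C) = card (nb E w \<inter> Cb) + card (nb E w \<inter> Cn)" using eqC by simp
      have dW: "card (nb E w \<inter> W) \<le> m - 2" using Wdeg[OF wW] cW 3 by simp
      show ?thesis
      proof (cases "card (nb E w \<inter> Cb) = 0")
        case True then show ?thesis using split[of w] cc dW by simp
      next
        case False
        show ?thesis
        proof (cases "dg E w \<le> 3")
          case True then show ?thesis using m6 by simp
        next
          case False2: False
          from False have "nb E w \<inter> Cb \<noteq> {}" by (metis card.empty)
          then obtain v where v: "v \<in> nb E w" "v \<in> Cb" by blast
          have wnu: "w \<notin> nb E u" using wW unfolding W_def C_def by auto
          have vu: "v \<noteq> u"
          proof
            assume "v = u" then have "u \<in> nb E w" using v by simp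
            then have "w \<in> nb E u" using nb_sym by metis
            then show False using wnu by simp
          qed
          have dv: "m \<le> dg E v" using v(2) by (simp add: Cb_def)
          have wv: "w \<in> nb E v" using v(1) nb_sym by metis
          have x1: "card (nb E v \<inter> W) \<le> 1" using xle1[OF v(2)] .
          have vW: "z = w" if "z \<in> nb E v \<inter> W" for z
          proof -
            have "finite (nb E v \<inter> W)" using nbfin by simp
            then have "\<forall>a1 \<in> nb E v \<inter> W. \<forall>a2 \<in> nb E v \<inter> W. a1 = a2"
              using x1 card_le_Suc0_iff_eq by auto
            then show ?thesis using that wv wW by blast
          qed
          have e: "{v,w} \<in> E" using wv by (simp add: nb_def)
          have "dg E v + card (nb E w - nb E v - {v}) \<le> m + 2" using F[OF e dv] False2 by simp
          then have c2: "card (nb E w - nb E v - {v}) \<le> 2" using dv by linarith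
          have sub: "nb E w \<inter> W \<subseteq> nb E w - nb E v - {v}"
          proof
            fix z assume z: "z \<in> nb E w \<inter> W"
            have "z \<noteq> v" using z v(2) unfolding W_def Cb_def by auto
            moreover have "z \<notin> nb E v"
            proof
              assume "z \<in> nb E v" then have "z = w" using vW z by auto
              then show False using z nb_irr[OF sg] by auto
            qed
            ultimately show "z \<in> nb E w - nb E v - {v}" using z by auto
          qed
          have "card (nb E w \<inter> W) \<le> card (nb E w - nb E v - {v})"
            using nbfin by (intro card_mono[OF _ sub]) auto
          then have "card (nb E w \<inter> W) \<le> 2" using c2 by linarith
          then show ?thesis using split[of w] cc m6 by linarith
        qed
      qed
    qed
    have SW: "(\<Sum>w\<in>W. dg E w) \<le> card W * (m-2) + (\<Sum>w\<in>W. card (nb E w \<inter> Cn)) + (\<Sum>w\<in>W. (card (nb E w \<inter> Cb) - (m-4)))"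
    proof -
      have "(\<Sum>w\<in>W. dg E w) \<le> (\<Sum>w\<in>W. (m-2) + card (nb E w \<inter> Cn) + (card (nb E w \<inter> Cb) - (m-4)))"
        using C2 by (intro sum_mono) auto
      also have "\<dots> = card W * (m-2) + (\<Sum>w\<in>W. card (nb E w \<inter> Cn)) + (\<Sum>w\<in>W. (card (nb E w \<inter> Cb) - (m-4)))"
        by (simp add: sum.distrib)
      finally show ?thesis .
    qed
    have s1: "(\<Sum>w\<in>W. card (nb E w \<inter> Cn)) = (\<Sum>v\<in>Cn. card (nb E v \<inter> W))" using dc[OF CbV(2)] .
    have s1': "(\<Sum>v\<in>Cn. card (nb E v \<inter> W)) = (\<Sum>v\<in>C. if \<not> m \<le> dg E v then card (nb E v \<inter> W) else 0)"
      unfolding Cn_def using finC by (simp add: sum.inter_filter)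
    have s2: "(\<Sum>w\<in>W. (card (nb E w \<inter> Cb) - (m-4))) \<le> (\<Sum>w\<in>W. card (nb E w \<inter> Cb)) - (m-4)"
      using sum_tsub[OF finW] .
    have s3: "(\<Sum>w\<in>W. card (nb E w \<inter> Cb)) = (\<Sum>v\<in>Cb. card (nb E v \<inter> W))" using dc[OF CbV(1)] .
    have s4: "(\<Sum>v\<in>Cb. card (nb E v \<inter> W)) \<le> card Cb * 1" using xle1 by (rule sum_le_nat)
    have s5: "card Cb \<le> m + 2" using finC cC 3 card_mono[OF finC, of Cb] by (auto simp: Cb_def)
    have sC: "(\<Sum>v\<in>C. dg E v + (if \<not> m \<le> dg E v then card (nb E v \<inter> W) else 0)) \<le> card C * (m+1)"
      using C1 by (rule sum_le_nat)
    then have sC': "(\<Sum>v\<in>C. dg E v) + (\<Sum>v\<in>C. if \<not> m \<le> dg E v then card (nb E v \<inter> W) else 0) \<le> (m+2) * (m+1)"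
      using cC 3 by (simp add: sum.distrib)
    have cW': "card W = m - 1" using cW 3 by simp
    have t1: "card W * (m-2) = (m-1)*(m-2)" using cW' by simp
    have t2: "(\<Sum>w\<in>W. card (nb E w \<inter> Cb)) - (m-4) \<le> 6" using s3 s4 s5 m6 by linarith
    have "(\<Sum>v\<in>V. dg E v) \<le> (m+2)*(m+1) + (m-1)*(m-2) + 6"
      using sumV SW s1 s1' s2 t1 t2 sC' by linarith
    then show ?thesis using num4[OF m6] by linarith
  next
    case 2
    define S where "S = {w\<in>W. m \<le> dg E w \<and> card (nb E w \<inter> C) \<le> m - 5}"
    define H where "H = {w\<in>W. m - 4 \<le> card (nb E w \<inter> C)}"
    have SWs: "S \<subseteq> W" "H \<subseteq> W" by (auto simp: S_def H_def)
    have finS: "finite S" "finite H" using SWs finW finite_subset by auto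
    have SV: "S \<subseteq> V" using SWs WV by auto
    have x2: "card (nb E v \<inter> W) \<le> 2" if vC: "v \<in> C" for v
    proof (cases "v = u")
      case True then show ?thesis using xu by simp
    next
      case False then have v: "v \<in> nb E u" using vC C_def by auto
      show ?thesis
      proof (cases "4 \<le> dg E v")
        case True then show ?thesis using xbig[OF v] 2 by simp
      next
        case False then show ?thesis using xsmall[OF v] by linarith
      qed
    qed
    have D1: "dg E w \<le> (m-1) + (if w \<in> S then 1 else 0) + (if w \<in> H then 1 else 0)" if wW: "w \<in> W" for w
    proof (cases "dg E w \<le> m - 1")
      case True then show ?thesis by simp
    next
      case False
      then have dw: "dg E w = m" using dle[of w] wW WV 2 by auto
      show ?thesis
      proof (cases "card (nb E w \<inter> C) \<le> m - 5")
        case True then have "w \<in> S" using wW dw by (simp add: S_def)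
        then show ?thesis using dw by simp
      next
        case False then have "w \<in> H" using wW by (simp add: H_def)
        then show ?thesis using dw by simp
      qed
    qed
    have sumW: "(\<Sum>w\<in>W. dg E w) \<le> card W * (m-1) + card S + card H"
    proof -
      have "(\<Sum>w\<in>W. dg E w) \<le> (\<Sum>w\<in>W. (m-1) + (if w \<in> S then 1 else 0) + (if w \<in> H then 1 else 0))"
        using D1 by (intro sum_mono) auto
      also have "\<dots> = card W * (m-1) + card (W \<inter> S) + card (W \<inter> H)"
        using finW by (simp add: sum.distrib sum_ind)
      finally have "(\<Sum>w\<in>W. dg E w) \<le> card W * (m-1) + card (W \<inter> S) + card (W \<inter> H)" .
      moreover have "W \<inter> S = S" "W \<inter> H = H" using SWs by auto
      ultimately show ?thesis by simp
    qed
    have D2: "card H \<le> 12"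
    proof -
      have "card H * (m-4) \<le> (\<Sum>w\<in>H. card (nb E w \<inter> C))"
        by (rule sum_ge_nat) (simp add: H_def)
      also have "\<dots> \<le> (\<Sum>w\<in>W. card (nb E w \<inter> C))"
        using SWs finW by (intro sum_mono2) auto
      also have "\<dots> = (\<Sum>v\<in>C. card (nb E v \<inter> W))" using dc[OF CV] .
      also have "\<dots> = card (nb E u \<inter> W) + (\<Sum>v\<in>nb E u. card (nb E v \<inter> W))" using sumC .
      also have "(\<Sum>v\<in>nb E u. card (nb E v \<inter> W)) \<le> card (nb E u) * 2"
        using x2 C_def by (intro sum_le_nat) auto
      finally have "card H * (m-4) \<le> 2 * m" using xu du 2 by simp
      show ?thesis
      proof (rule ccontr)
        assume "\<not> card H \<le> 12"
        then have "13 * (m-4) \<le> card H * (m-4)" by (intro mult_le_mono1) simp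
        then show False using \<open>card H * (m-4) \<le> 2 * m\<close> m6 by linarith
      qed
    qed
    have D3: "dg E v + card (nb E v \<inter> S) \<le> m" if vC: "v \<in> C" for v
    proof (cases "card (nb E v \<inter> S) = 0")
      case True then show ?thesis using dle[of v] vC CV 2 by auto
    next
      case False
      from False have "nb E v \<inter> S \<noteq> {}" by (metis card.empty)
      then obtain w where w: "w \<in> nb E v" "w \<in> S" by blast
      have wW: "w \<in> W" using w SWs by auto
      have vu: "v \<noteq> u"
      proof
        assume "v = u" then have "w \<in> nb E u" using w by simp
        then show False using wW unfolding W_def C_def by auto
      qed
      then have v: "v \<in> nb E u" using vC C_def by auto
      have kx: "card (nb E v \<inter> S) \<le> card (nb E v \<inter> W)" using SWs nbfin by (intro card_mono) auto
      have x: "card (nb E v \<inter> W) \<le> 2" using x2 vC by simp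
      show ?thesis
      proof (cases "4 \<le> dg E v")
        case False then show ?thesis using kx x m6 by linarith
      next
        case True
        have e: "{w,v} \<in> E" using w(1) by (simp add: nb_def insert_commute)
        have dw: "m \<le> dg E w" using w(2) S_def by auto
        have cw: "card (nb E w \<inter> C) \<le> m - 5" using w(2) S_def by auto
        have "dg E w + card (nb E v - nb E w - {w}) \<le> m+2" using F[OF e dw True] .
        then have c2: "card (nb E v - nb E w - {w}) \<le> 2" using dw by linarith
        have wC: "w \<notin> C" using wW W_def by auto
        have sub: "nb E v \<inter> C \<subseteq> (nb E v - nb E w - {w}) \<union> (nb E w \<inter> C - {v})"
          using wC nb_irr[OF sg, of v] by auto
        have "v \<in> nb E w" using w(1) nb_sym by metis
        then have vw: "v \<in> nb E w \<inter> C" using vC by simp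
        have c3: "card (nb E w \<inter> C - {v}) = card (nb E w \<inter> C) - 1"
          using vw nbfin by (simp add: card_Diff_singleton)
        have "card (nb E v \<inter> C) \<le> card ((nb E v - nb E w - {w}) \<union> (nb E w \<inter> C - {v}))"
          using nbfin by (intro card_mono[OF _ sub]) auto
        also have "\<dots> \<le> card (nb E v - nb E w - {w}) + card (nb E w \<inter> C - {v})" by (rule card_Un_le)
        finally have "card (nb E v \<inter> C) \<le> m - 4" using c2 c3 cw m6 by linarith
        then show ?thesis using split[of v] kx x m6 by linarith
      qed
    qed
    have sC: "(\<Sum>v\<in>C. dg E v + card (nb E v \<inter> S)) \<le> card C * m" using D3 by (rule sum_le_nat)
    then have sC': "(\<Sum>v\<in>C. dg E v) + (\<Sum>v\<in>C. card (nb E v \<inter> S)) \<le> (m+1) * m"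
      using cC 2 by (simp add: sum.distrib)
    have kS: "(\<Sum>v\<in>C. card (nb E v \<inter> S)) = (\<Sum>w\<in>S. card (nb E w \<inter> C))" using dcount[OF sg CV SV] .
    have cS: "card S * 1 \<le> (\<Sum>w\<in>S. card (nb E w \<inter> C))"
    proof (rule sum_ge_nat)
      fix w assume wS: "w \<in> S"
      then have wW: "w \<in> W" and dw: "m \<le> dg E w" using SWs by (auto simp: S_def)
      have "card (nb E w \<inter> W) \<le> m - 1" using Wdeg[OF wW] cW 2 by simp
      then show "1 \<le> card (nb E w \<inter> C)" using split[of w] dw m6 by linarith
    qed
    have cW': "card W * (m-1) = m * (m-1)" using cW 2 by simp
    have "(\<Sum>v\<in>V. dg E v) \<le> (m+1)*m + m*(m-1) + 12"
      using sumV sumW sC' kS cS cW' D2 by linarith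
    then show ?thesis using num5[OF m6] by linarith
  qed
qed

end


lemma F_from_free:
  assumes sg: "simple_graph V E" and n6: "n \<ge> 6"
    and free: "\<not> contains_copy {0..<n} (T3_edges n) V E"
    and uv: "{u,v} \<in> E" and du: "n - 4 \<le> dg E u" and dv: "4 \<le> dg E v"
  shows "dg E u + card (nb E v - nb E u - {u}) \<le> (n - 4) + 2"
proof (rule ccontr)
  assume c: "\<not> ?thesis"
  have nbfin: "finite (nb E z)" for z using nb_fin[OF sg] .
  have vu: "v \<in> nb E u" and uv': "u \<in> nb E v" using uv by (auto simp: nb_def insert_commute)
  have cA: "card (nb E u - {v}) = dg E u - 1" using vu nbfin by (simp add: card_Diff_singleton)
  have cB: "card (nb E v - {u}) = dg E v - 1" using uv' nbfin by (simp add: card_Diff_singleton)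
  have "(nb E u - {v}) \<union> (nb E v - nb E u - {u}) \<subseteq> (nb E u - {v}) \<union> (nb E v - {u})" by auto
  then have "card ((nb E u - {v}) \<union> (nb E v - nb E u - {u})) \<le> card ((nb E u - {v}) \<union> (nb E v - {u}))"
    using nbfin by (intro card_mono) auto
  moreover have "card ((nb E u - {v}) \<union> (nb E v - nb E u - {u})) = card (nb E u - {v}) + card (nb E v - nb E u - {u})"
    using nbfin by (intro card_Un_disjoint) auto
  ultimately have cU: "n - 2 \<le> card ((nb E u - {v}) \<union> (nb E v - {u}))" using c cA n6 du by linarith
  have "contains_copy {0..<n} (T3_edges n) V E"
    by (rule emb[OF sg n6 uv]) (use cA cB cU du dv n6 in linarith)+
  then show False using free by simp
qed

lemma upper:
  assumes n10: "n \<ge> 10" and sg: "simple_graph {0..<2*n-7} E"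
    and free: "\<not> contains_copy {0..<n} (T3_edges n) {0..<2*n-7} E"
  shows "card E \<le> (n-4)*(n-4) + 6"
proof -
  have "(\<Sum>v\<in>{0..<2*n-7}. dg E v) \<le> 2*(n-4)*(n-4) + 12"
  proof (rule main_count[OF sg])
    show "card {0..<2*n-7} = 2*(n-4)+1" using n10 by simp
    show "6 \<le> n - 4" using n10 by simp
    fix u v assume "{u,v} \<in> E" "n - 4 \<le> dg E u" "4 \<le> dg E v"
    then show "dg E u + card (nb E v - nb E u - {u}) \<le> (n - 4) + 2"
      using F_from_free[OF sg _ free] n10 by simp
  qed
  then show ?thesis using handshake[OF sg] by simp
qed



lemma two_choose: "2 * (x choose 2) = x * (x - 1)"
proof -
  have "even (x * (x - 1))" by (cases "even x") auto
  then have "x * (x - 1) div 2 * 2 = x * (x - 1)" by simp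
  then show ?thesis by (simp add: choose_two mult.commute)
qed

definition E0 :: "nat \<Rightarrow> nat set set" where
  "E0 n = {e. e \<subseteq> {0..<n-1} \<and> card e = 2} \<union> {e. e \<subseteq> {n-1..<2*n-7} \<and> card e = 2}"

lemma E0_sg: "n \<ge> 10 \<Longrightarrow> simple_graph {0..<2*n-7} (E0 n)"
  unfolding simple_graph_def E0_def by auto

lemma E0_card: assumes "n \<ge> 10" shows "card (E0 n) = (n-4)*(n-4) + 6"
proof -
  let ?A = "{e. e \<subseteq> {0..<n-1} \<and> card e = 2}" and ?B = "{e. e \<subseteq> {n-1..<2*n-7} \<and> card e = 2}"
  have fA: "finite ?A" by (rule finite_subset[of _ "Pow {0..<n-1}"]) auto
  have fB: "finite ?B" by (rule finite_subset[of _ "Pow {n-1..<2*n-7}"]) auto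
  have dis: "?A \<inter> ?B = {}"
  proof (rule ccontr)
    assume "?A \<inter> ?B \<noteq> {}"
    then obtain e where "e \<subseteq> {0..<n-1}" "e \<subseteq> {n-1..<2*n-7}" "card e = 2" by blast
    then have "e = {}" by (fastforce simp: subset_iff)
    then show False using \<open>card e = 2\<close> by simp
  qed
  have cA: "card ?A = (n-1) choose 2" using n_subsets[of "{0..<n-1}" 2] by simp
  have cB: "card ?B = (n-6) choose 2" using n_subsets[of "{n-1..<2*n-7}" 2] assms by simp
  have "card (E0 n) = ((n-1) choose 2) + ((n-6) choose 2)"
    unfolding E0_def using card_Un_disjoint[OF fA fB dis] cA cB by simp
  moreover obtain k where n: "n = k + 10" using assms by (metis add.commute le_iff_add)
  ultimately have "card (E0 n) = ((k+9) choose 2) + ((k+4) choose 2)" by (simp add: add.commute)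
  then have "2 * card (E0 n) = (k+9)*(k+8) + (k+4)*(k+3)"
    using two_choose[of "k+9"] two_choose[of "k+4"] by (simp add: add.commute)
  then show ?thesis by (simp add: n algebra_simps)
qed

lemma E0_free:
  assumes n10: "n \<ge> 10"
  shows "\<not> contains_copy {0..<n} (T3_edges n) {0..<2*n-7} (E0 n)"
proof
  assume "contains_copy {0..<n} (T3_edges n) {0..<2*n-7} (E0 n)"
  then obtain f where inj: "inj_on f {0..<n}" and img: "f ` {0..<n} \<subseteq> {0..<2*n-7}"
    and ed: "\<And>e. e \<in> T3_edges n \<Longrightarrow> f ` e \<in> E0 n" unfolding contains_copy_def by blast
  define P where "P x = (x < n - 1)" for x
  have same: "P (f a) = P (f b)" if "{a,b} \<in> T3_edges n" for a b
  proof -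
    have "{f a, f b} \<in> E0 n" using ed[OF that] by simp
    then have "{f a, f b} \<subseteq> {0..<n-1} \<or> {f a, f b} \<subseteq> {n-1..<2*n-7}" unfolding E0_def by blast
    then show ?thesis unfolding P_def by auto
  qed
  have all: "P (f i) = P (f 0)" if "i < n" for i
  proof -
    have "i = 0 \<or> (1 \<le> i \<and> i \<le> n - 4) \<or> i = n-3 \<or> i = n-2 \<or> i = n-1" using that by linarith
    then consider "i = 0" | "1 \<le> i \<and> i \<le> n - 4" | "i \<in> {n-3, n-2, n-1}" by blast
    then show ?thesis
    proof cases
      case 1 then show ?thesis by simp
    next
      case 2 then have "{0,i} \<in> T3_edges n" unfolding T3_edges_def by blast
      then show ?thesis using same by metis
    next
      case 3 then have "{1,i} \<in> T3_edges n" unfolding T3_edges_def by blast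
      then have "P (f 1) = P (f i)" using same by metis
      moreover have "{0,1} \<in> T3_edges n" unfolding T3_edges_def using n10 by force
      then have "P (f 0) = P (f 1)" using same by metis
      ultimately show ?thesis by simp
    qed
  qed
  have cimg: "card (f ` {0..<n}) = n" using card_image[OF inj] by simp
  show False
  proof (cases "P (f 0)")
    case True
    then have "f ` {0..<n} \<subseteq> {0..<n-1}" using all unfolding P_def by auto
    then have "card (f ` {0..<n}) \<le> n - 1" using card_mono[of "{0..<n-1}"] by fastforce
    then show False using cimg n10 by simp
  next
    case False
    then have "f ` {0..<n} \<subseteq> {n-1..<2*n-7}" using all img unfolding P_def by force
    then have "card (f ` {0..<n}) \<le> n - 6" using card_mono[of "{n-1..<2*n-7}"] n10 by fastforce
    then show False using cimg n10 by simp
  qed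
qed

theorem lemma4p5:
  fixes n :: nat
  assumes "n \<ge> 10"
  shows "int (ex_num (2 * n - 7) {0..<n} (T3_edges n)) = int n ^ 2 - 8 * int n + 22"
proof -
  let ?S = "{card E | E. simple_graph {0..<2*n-7} E \<and> \<not> contains_copy {0..<n} (T3_edges n) {0..<2*n-7} E}"
  have fin: "finite ?S"
  proof -
    have "?S \<subseteq> card ` Pow (Pow {0..<2*n-7})" by (auto simp: simple_graph_def)
    then show ?thesis by (rule finite_subset) simp
  qed
  have "Max ?S = (n-4)*(n-4) + 6"
  proof (rule Max_eqI[OF fin])
    fix y assume "y \<in> ?S" then show "y \<le> (n-4)*(n-4) + 6" using upper[OF assms] by blast
  next
    show "(n-4)*(n-4) + 6 \<in> ?S" using E0_sg[OF assms] E0_free[OF assms] E0_card[OF assms] by force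
  qed
  then have "ex_num (2 * n - 7) {0..<n} (T3_edges n) = (n-4)*(n-4) + 6" unfolding ex_num_def by simp
  moreover have "int ((n-4)*(n-4) + 6) = int n ^ 2 - 8 * int n + 22"
  proof -
    obtain k where "n = k + 10" using assms by (metis add.commute le_iff_add)
    then show ?thesis by (simp add: power2_eq_square algebra_simps)
  qed
  ultimately show ?thesis by simp
qed


end
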